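(* Let $r$ be a rational number with $0<r<1$ and $r\neq 1/p$ for every integer $p\ge2$, written as $r=[m_1,\dots,m_k]$ with $k\ge2$, $m_i\in\mathbb{Z}_{>0}$, $m_k\ge2$, and let $n\ge2$ be an integer. Let $(S_1,S_2,S_1,S_2)$ be the decomposition of $CS(r)$ described in the context. Then for every rational number $s\in I_1(r;n)\cup I_2(r;n)$: (1) if $k$ is even, $CS(s)$ does not contain $((2n-2)\langle S_1,S_2\rangle,S_1)$ as a subsequence; (2) if $k$ is odd, $CS(s)$ does not contain $((2n-2)\langle S_2,S_1\rangle,S_2)$ as a subsequence.
   Context: Continued fractions: $[m_1,\dots,m_k]=1/(m_1+1/(m_2+\cdots+1/m_k))$. Set $m=m_1$. Intervals: if $k$ is even, $I_1(r;n)=[0,[m_1,\dots,m_{k-1},m_k-1,2]]$ and $I_2(r;n)=([m_1,\dots,m_k,2n-2],1]$; if $k$ is odd, $I_1(r;n)=[0,[m_1,\dots,m_k,2n-2])$ and $I_2(r;n)=[[m_1,\dots,m_{k-1},m_k-1,2],1]$. For $s\in\mathbb{Q}\cup\{\infty\}$, $u_s$ is the cyclically reduced, cyclically alternating word in the free group $F(a,b)$ (letters $a^{\pm1}$, $b^{\pm1}$ alternate) representing the simple loop of slope $s$ on the 4-punctured 2-bridge sphere in the upper tangle complement (well defined up to cyclic permutation and inversion). For a cyclically reduced cyclic word $(w)$ in $\{a,b\}$, decompose it cyclically into maximal subwords that are alternately positive (all exponents $+1$) and negative (all exponents $-1$); $CS(w)$ is the cyclic sequence of their lengths (if $w$ is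 entirely positive or negative, $CS(w)=((|w|))$). $CS(s):=CS(u_s)$. $CS(r)$ consists of the integers $m$ and $m+1$ and has a decomposition $CS(r)=((S_1,S_2,S_1,S_2))$ in which each $S_i$ is a symmetric sequence (equal to its reverse) occurring only twice in $CS(r)$, $S_1$ begins and ends with $m+1$, and $S_2$ begins and ends with $m$; this is the decomposition meant. For a sequence $T$ and finite sequences $A,B$, $d\langle A,B\rangle$ denotes $(A,B,A,B,\dots,A,B)$ with $d$ copies of $(A,B)$. "Contains as a subsequence" means occurs as a block of consecutive terms of the cyclic sequence. *)

theory Defs
  imports Complex_Main
begin

fun cf :: "nat list \<Rightarrow> rat" where
  "cf [] = 0"
| "cf (m # ms) = 1 / (of_nat m + cf ms)"

text \<open>Letters of the free group F(a,b); a word is a list of (generator, exponent) with exponent \<plusminus>1.\<close>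
datatype gen = GA | GB

type_synonym word = "(gen \<times> int) list"

definition winv :: "word \<Rightarrow> word" where
  "winv w = rev (map (\<lambda>(x, e). (x, - e)) w)"

text \<open>The word u_s for s = q/p (p \<ge> 1, gcd(p,q)=1), following Lee--Sakuma:
  eps_i = (-1)^floor(i q / p); hat u = b^eps_1 a^eps_2 ... (alternating, length p-1);
  if p odd, u = a (hat u) b^((-1)^q) (hat u)^-1; if p even, u = a (hat u) a^-1 (hat u)^-1.\<close>
definition eps :: "int \<Rightarrow> int \<Rightarrow> nat \<Rightarrow> int" where
  "eps q p i = (if even ((int i * q) div p) then 1 else -1)"

definition hat_u :: "rat \<Rightarrow> word" where
  "hat_u s = (case quotient_of s of (q, p) \<Rightarrow>
     map (\<lambda>i. (if odd i then GB else GA, eps q p i)) [1..<nat p])"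

definition u_word :: "rat \<Rightarrow> word" where
  "u_word s = (case quotient_of s of (q, p) \<Rightarrow>
     (if odd p then [(GA, 1)] @ hat_u s @ [(GB, if even q then 1 else -1)] @ winv (hat_u s)
      else [(GA, 1)] @ hat_u s @ [(GA, -1)] @ winv (hat_u s)))"

function runs :: "int list \<Rightarrow> nat list" where
  "runs [] = []"
| "runs (x # xs) = Suc (length (takeWhile (\<lambda>y. y = x) xs)) # runs (dropWhile (\<lambda>y. y = x) xs)"
  by pat_completeness auto
termination
  by (relation "measure length") (auto simp: le_imp_less_Suc length_dropWhile_le)

text \<open>CS of a cyclic word (given by a representative list), as a representative list
  of the cyclic sequence: rotate to start at a sign change, then take block lengths.\<close>
definition CS_word :: "word \<Rightarrow> nat list" where
  "CS_word w = (let es = map snd w in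
     if (\<forall>e\<in>set es. e = hd es) then [length es]
     else runs (rotate (length (takeWhile (\<lambda>e. e = hd es) es)) es))"

definition CS :: "rat \<Rightarrow> nat list" where
  "CS s = CS_word (u_word s)"

definition cyc_contains :: "nat list \<Rightarrow> nat list \<Rightarrow> bool" where
  "cyc_contains L P \<longleftrightarrow> length P \<le> length L \<and> (\<exists>j<length L. take (length P) (rotate j L) = P)"

definition cyc_occ :: "nat list \<Rightarrow> nat list \<Rightarrow> nat" where
  "cyc_occ L S = card {j. j < length L \<and> length S \<le> length L \<and> take (length S) (rotate j L) = S}"

text \<open>d<A,B> = (A,B,...,A,B) with d copies of (A,B).\<close>
definition drep :: "nat \<Rightarrow> nat list \<Rightarrow> nat list \<Rightarrow> nat list" where
  "drep d A B = concat (replicate d (A @ B))"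

definition is_CS_decomp :: "nat \<Rightarrow> nat list \<Rightarrow> nat list \<Rightarrow> nat list \<Rightarrow> bool" where
  "is_CS_decomp m L S1 S2 \<longleftrightarrow>
     (\<exists>j. rotate j L = S1 @ S2 @ S1 @ S2) \<and>
     S1 \<noteq> [] \<and> S2 \<noteq> [] \<and> rev S1 = S1 \<and> rev S2 = S2 \<and>
     cyc_occ L S1 = 2 \<and> cyc_occ L S2 = 2 \<and>
     hd S1 = m + 1 \<and> last S1 = m + 1 \<and> hd S2 = m \<and> last S2 = m"

definition I1 :: "nat list \<Rightarrow> nat \<Rightarrow> rat set" where
  "I1 ms n = (if even (length ms)
     then {0 .. cf (butlast ms @ [last ms - 1, 2])}
     else {0 ..< cf (ms @ [2 * n - 2])})"

definition I2 :: "nat list \<Rightarrow> nat \<Rightarrow> rat set" where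
  "I2 ms n = (if even (length ms)
     then {cf (ms @ [2 * n - 2]) <.. 1}
     else {cf (butlast ms @ [last ms - 1, 2]) .. 1})"

end

theory Submission
  imports Defs
begin


lemma int_div_eqI:
  fixes x p c :: int
  assumes "p > 0" "c * p \<le> x" "x < (c + 1) * p"
  shows "x div p = c"
proof -
  have "x = c * p + (x - c * p)" by simp
  moreover have "(x - c*p) div p = 0" using assms by (intro div_pos_pos_trivial) (auto simp: algebra_simps)
  ultimately show ?thesis using assms(1)
    by (metis add.commute add_0 div_mult_self3 less_irrefl)
qed

lemma runs_rep:
  assumes "0 < n" "ys = [] \<or> hd ys \<noteq> x"
  shows "runs (replicate n x @ ys) = n # runs ys"
proof -
  obtain n' where n: "n = Suc n'" using assms(1) by (cases n) auto
  have tw: "takeWhile (\<lambda>y. y = x) ys = []" and dw: "dropWhile (\<lambda>y. y = x) ys = ys"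
    using assms(2) by (cases ys; auto)+
  have "takeWhile (\<lambda>y. y = x) (replicate n' x @ ys) = replicate n' x"
    by (subst takeWhile_append2) (auto simp: tw)
  moreover have "dropWhile (\<lambda>y. y = x) (replicate n' x @ ys) = ys"
    by (subst dropWhile_append2) (auto simp: dw)
  ultimately show ?thesis using n by simp
qed

lemma runs_blocks:
  assumes "\<And>c. 0 < len c" "\<And>c. sg (Suc c) \<noteq> sg c"
  shows "runs (concat (map (\<lambda>c. replicate (len c) (sg c)) [a..<b])) = map len [a..<b]"
proof (induction "b - a" arbitrary: a)
  case 0
  then show ?case by simp
next
  case (Suc k)
  then have ab: "a < b" by simp
  have u: "[a..<b] = a # [Suc a..<b]" using ab by (simp add: upt_rec)
  let ?rest = "concat (map (\<lambda>c. replicate (len c) (sg c)) [Suc a..<b])"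
  have h: "?rest = [] \<or> hd ?rest \<noteq> sg a"
  proof (cases "Suc a < b")
    case True
    then have "[Suc a..<b] = Suc a # [Suc (Suc a)..<b]" by (simp add: upt_rec)
    moreover obtain k where "len (Suc a) = Suc k" using assms(1)[of "Suc a"] not0_implies_Suc by auto
    ultimately show ?thesis using assms(2)[of a] by simp
  next
    case False
    then show ?thesis by simp
  qed
  have "runs (concat (map (\<lambda>c. replicate (len c) (sg c)) [a..<b])) = len a # runs ?rest"
    unfolding u using runs_rep[OF assms(1) h] by simp
  also have "runs ?rest = map len [Suc a..<b]" using Suc by simp
  finally show ?case using u by simp
qed

lemma upt_concat:
  assumes "mono B" "a \<le> b"
  shows "[B a..<B b] = concat (map (\<lambda>c. [B c..<B (Suc c)]) [a..<b])"
  using assms(2)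
proof (induction b)
  case 0
  then show ?case by simp
next
  case (Suc b)
  show ?case
  proof (cases "a = Suc b")
    case True then show ?thesis by simp
  next
    case False
    then have ab: "a \<le> b" using Suc by simp
    have m1: "B a \<le> B b" using assms(1) ab by (simp add: monoD)
    have m2: "B b \<le> B (Suc b)" using assms(1) by (simp add: monoD)
    have e: "[B a..<B (Suc b)] = [B a..<B b] @ [B b..<B (Suc b)]"
      using upt_add_eq_append[of "B a" "B b" "B (Suc b) - B b"] m1 m2 by simp
    have u: "[a..<Suc b] = [a..<b] @ [b]" using ab by simp
    show ?thesis unfolding e u using Suc.IH[OF ab] by simp
  qed
qed

lemma map_upt_shift:
  assumes "\<And>i. f (i + N) = f i"
  shows "map f [a + N..<b + N] = map f [a..<b]"
proof (rule nth_equalityI)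
  fix i assume "i < length (map f [a + N..<b + N])"
  then show "map f [a + N..<b + N] ! i = map f [a..<b] ! i"
    using assms[of "a+i"] by (simp add: nth_map_upt ac_simps)
qed simp

lemma rot_upt:
  assumes "\<And>i. f (i + N) = f i" "j < N"
  shows "rotate j (map f [a..<a+N]) = map f [a+j..<a+j+N]"
proof -
  have "rotate j (map f [a..<a+N]) = drop j (map f [a..<a+N]) @ take j (map f [a..<a+N])"
    using assms(2) by (simp add: rotate_drop_take)
  also have "drop j (map f [a..<a+N]) = map f [a+j..<a+N]" by (simp add: drop_map)
  also have "take j (map f [a..<a+N]) = map f [a..<a+j]" using assms(2) by (simp add: take_map)
  also have "\<dots> = map f [a+N..<a+j+N]" using map_upt_shift[of f N a "a+j", OF assms(1)] by simp
  also have "map f [a+j..<a+N] @ map f [a+N..<a+j+N] = map f [a+j..<a+j+N]"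
    using upt_add_eq_append[of "a+j" "a+N" j] assms(2) by (simp add: ac_simps)
  finally show ?thesis .
qed



definition Cf :: "rat \<Rightarrow> nat \<Rightarrow> int" where "Cf t c = \<lceil>of_nat c * t\<rceil>"
definition Df :: "rat \<Rightarrow> nat \<Rightarrow> nat" where "Df t c = nat (Cf t (Suc c) - Cf t c)"

lemma eps_sym:
  assumes p: "p > 0" and cop: "coprime q p" and i: "0 < i" "i < nat p"
  shows "eps q p (nat p + i) = - eps q p (nat p - i)"
proof -
  have nd: "(int i * q) mod p \<noteq> 0"
  proof
    assume "(int i * q) mod p = 0"
    then have "p dvd int i * q" by auto
    then have "p dvd int i" using cop by (meson coprime_commute coprime_dvd_mult_left_iff)
    then show False using i p by (auto dest: zdvd_imp_le)
  qed
  have e1: "int (nat p + i) * q = int i * q + q * p" using p by (simp add: algebra_simps)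
  have e2: "int (nat p - i) * q = - (int i * q) + q * p" using p i by (simp add: algebra_simps of_nat_diff)
  have d1: "(int (nat p + i) * q) div p = (int i * q) div p + q" unfolding e1 using p by simp
  have d2: "(int (nat p - i) * q) div p = - ((int i * q) div p) - 1 + q"
    unfolding e2 using div_mult_self1[of p "- (int i * q)" q] p nd by (simp add: zdiv_zminus1_eq_if)
  show ?thesis unfolding eps_def d1 d2 by auto
qed

lemma eps_period:
  assumes "p > 0"
  shows "eps q p (i + 2 * nat p) = eps q p i"
proof -
  have "int (i + 2 * nat p) * q = int i * q + (2*q) * p" using assms by (simp add: algebra_simps)
  then have "(int (i + 2 * nat p) * q) div p = (int i * q) div p + 2 * q" using assms by simp
  then show ?thesis unfolding eps_def by simp
qed

lemma eps_mid:
  assumes "p > 0"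
  shows "eps q p (nat p) = (if even q then 1 else -1)"
  using assms unfolding eps_def by simp

lemma es_eq:
  assumes qs: "quotient_of s = (q, p)"
  shows "map snd (u_word s) = map (eps q p) [0..<2 * nat p]"
proof -
  have p: "p > 0" using qs quotient_of_denom_pos by blast
  have cop: "coprime q p" using qs quotient_of_coprime by blast
  define P where "P = nat p"
  have P1: "P \<ge> 1" using p P_def by simp
  have h: "map snd (hat_u s) = map (eps q p) [1..<P]" unfolding hat_u_def qs P_def by simp
  have w: "map snd (winv (hat_u s)) = rev (map (\<lambda>i. - eps q p i) [1..<P])"
    unfolding winv_def hat_u_def qs P_def by (simp add: rev_map[symmetric] comp_def)
  have mid: "(if odd p then (if even q then 1 else -1) else -1) = eps q p P"
  proof (cases "odd p")
    case True then show ?thesis using eps_mid[OF p] P_def by simp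
  next
    case False
    have "odd q"
    proof
      assume "even q"
      then have "is_unit (2::int)" using False cop coprime_common_divisor by blast
      then show False by simp
    qed
    then show ?thesis using eps_mid[OF p] P_def False by simp
  qed
  have ms: "map snd (u_word s) = [1] @ map (eps q p) [1..<P] @ [eps q p P] @ rev (map (\<lambda>i. - eps q p i) [1..<P])"
    using h w mid unfolding u_word_def qs P_def[symmetric] by (cases "odd p") auto
  have tail: "map (eps q p) [Suc P..<2*P] = rev (map (\<lambda>i. - eps q p i) [1..<P])"
  proof (rule nth_equalityI)
    show "length (map (eps q p) [Suc P..<2 * P]) = length (rev (map (\<lambda>i. - eps q p i) [1..<P]))"
      by simp
  next
    fix k assume "k < length (map (eps q p) [Suc P..<2 * P])"
    then have k: "k + 1 < P" by simp
    have "eps q p (P + (k+1)) = - eps q p (P - (k+1))"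
      using eps_sym[OF p cop, of "k+1"] k P_def by simp
    then show "map (eps q p) [Suc P..<2 * P] ! k = rev (map (\<lambda>i. - eps q p i) [1..<P]) ! k"
      using k nth_upt[of "Suc 0" "P - Suc (Suc k)" P] Suc_diff_Suc[of "Suc k" P] by (simp add: rev_nth nth_map_upt)
  qed
  have u1: "[0..<2*P] = 0 # [1..<2*P]" using P1 by (simp add: upt_rec)
  have u2: "[1..<2*P] = [1..<P] @ [P..<2*P]" using upt_add_eq_append[of 1 P P] P1 by (simp add: mult_2)
  have u3: "[P..<2*P] = P # [Suc P..<2*P]" using P1 by (simp add: upt_rec)
  have u: "[0..<2*P] = [0] @ [1..<P] @ [P] @ [Suc P..<2*P]" using u1 u2 u3 by simp
  show ?thesis unfolding ms P_def[symmetric] u tail[symmetric]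
    by (simp add: eps_def)
qed



lemma qs_facts:
  assumes qs: "quotient_of s = (q, p)" and s: "0 < s" "s \<le> 1"
  shows "p > 0" "q > 0" "q \<le> p" "coprime q p" "1 / s = of_int p / of_int q"
proof -
  show p: "p > 0" using qs quotient_of_denom_pos by blast
  show "coprime q p" using qs quotient_of_coprime by blast
  have sq: "s = of_int q / of_int p" using qs quotient_of_div by blast
  show q: "q > 0" using s(1) p unfolding sq by (simp add: zero_less_divide_iff)
  show "q \<le> p" using s(2) p unfolding sq by (simp add: divide_le_eq)
  show "1 / s = of_int p / of_int q" unfolding sq by simp
qed

lemma eps_block:
  assumes qs: "quotient_of s = (q, p)" and s: "0 < s" "s \<le> 1"
    and j1: "nat \<lceil>of_nat c * (1/s)\<rceil> \<le> j" and j2: "j < nat \<lceil>of_nat (Suc c) * (1/s)\<rceil>"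
  shows "eps q p j = (if even c then 1 else -1)"
proof -
  note f = qs_facts[OF qs s]
  have a1: "of_nat c * (1/s) \<le> of_nat j"
  proof -
    have "of_nat c * (1/s) \<le> of_int \<lceil>of_nat c * (1/s)\<rceil>" by (rule le_of_int_ceiling)
    also have "\<dots> \<le> of_int (int j)" using j1 by linarith
    finally show ?thesis by simp
  qed
  have a2: "of_nat j < of_nat (Suc c) * (1/s)"
  proof -
    have "int j < \<lceil>of_nat (Suc c) * (1/s)\<rceil>" using j2 by linarith
    then show ?thesis by (simp add: less_ceiling_iff)
  qed
  have b1: "int c * p \<le> int j * q"
  proof -
    have "of_nat c * (of_int p / of_int q) \<le> (of_nat j :: rat)" using a1 f(5) by simp
    then have "of_nat c * of_int p \<le> (of_nat j * of_int q :: rat)" using f(2) by (simp add: divide_le_eq mult.assoc)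
    then have "rat_of_int (int c * p) \<le> of_int (int j * q)" by simp
    then show ?thesis by linarith
  qed
  have b2: "int j * q < (int c + 1) * p"
  proof -
    have "(of_nat j :: rat) < of_nat (Suc c) * (of_int p / of_int q)" using a2 f(5) by simp
    then have "of_nat j * of_int q < (of_nat (Suc c) * of_int p :: rat)" using f(2) by (simp add: less_divide_eq mult.assoc)
    then have "rat_of_int (int j * q) < of_int ((int c + 1) * p)" by (simp add: add.commute)
    then show ?thesis by linarith
  qed
  have "(int j * q) div p = int c" using int_div_eqI[OF f(1) b1 b2] .
  then show ?thesis unfolding eps_def by simp
qed



lemma Cf_nonneg: "t \<ge> 0 \<Longrightarrow> Cf t c \<ge> 0"
proof -
  assume "t \<ge> 0"
  then have "0 \<le> of_nat c * t" by simp
  then show ?thesis unfolding Cf_def by linarith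
qed

lemma Cf_step: "t \<ge> 1 \<Longrightarrow> Cf t (Suc c) \<ge> Cf t c + 1"
proof -
  assume t: "t \<ge> 1"
  have "of_nat c * t + 1 \<le> of_nat (Suc c) * t" using t by (simp add: algebra_simps)
  then have "\<lceil>of_nat c * t + 1\<rceil> \<le> \<lceil>of_nat (Suc c) * t\<rceil>" by (rule ceiling_mono)
  then show ?thesis unfolding Cf_def by simp
qed

lemma Cf_mono: "t \<ge> 0 \<Longrightarrow> c \<le> d \<Longrightarrow> Cf t c \<le> Cf t d"
  unfolding Cf_def by (intro ceiling_mono mult_right_mono) auto

lemma CS_formula:
  assumes qs: "quotient_of s = (q, p)" and s: "0 < s" "s \<le> 1"
  shows "CS s = map (Df (1/s)) [1..<2 * nat q + 1]"
proof -
  note f = qs_facts[OF qs s]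
  define t where "t = 1 / s"
  define P where "P = nat p"
  define Q where "Q = nat q"
  define B where "B c = nat (Cf t c)" for c
  have t1: "t \<ge> 1" using s unfolding t_def by simp
  have t0: "t \<ge> 0" using t1 by simp
  have tpq: "t = of_int p / of_int q" using f(5) t_def by simp
  have Bdef: "B c = nat \<lceil>of_nat c * (1/s)\<rceil>" for c unfolding B_def Cf_def t_def by simp
  have monoB: "mono B" unfolding B_def mono_def using Cf_mono[OF t0] by (simp add: nat_mono)
  have Bstep: "B c < B (Suc c)" for c unfolding B_def using Cf_step[OF t1, of c] Cf_nonneg[OF t0, of c] by simp
  have B0: "B 0 = 0" unfolding B_def Cf_def by simp
  define T where "T = B 1"
  have Qt: "of_nat Q * t = of_int p" unfolding tpq Q_def using f(2) by simp
  have BQ: "B (2 * Q + 1) = T + 2 * P"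
  proof -
    have "of_nat (2 * Q + 1) * t = t + of_int (2 * p)" using Qt by (simp add: algebra_simps)
    then have "Cf t (2 * Q + 1) = Cf t 1 + 2 * p" unfolding Cf_def using ceiling_add_of_int[of t "2*p"] by simp
    then show ?thesis unfolding B_def T_def P_def using f(1) Cf_nonneg[OF t0, of 1] by simp
  qed
  have TP: "T \<le> P"
  proof -
    have "t \<le> of_int p" unfolding tpq using f(1,2) by (simp add: divide_le_eq)
    then have "\<lceil>t\<rceil> \<le> p" by (simp add: ceiling_le_iff)
    then show ?thesis unfolding T_def B_def P_def Cf_def by simp
  qed
  have P1: "P \<ge> 1" using f(1) P_def by simp
  define es where "es = map snd (u_word s)"
  have es: "es = map (eps q p) [0..<2 * P]" unfolding es_def P_def by (rule es_eq[OF qs])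
  have eps_blk: "\<And>c j. B c \<le> j \<Longrightarrow> j < B (Suc c) \<Longrightarrow> eps q p j = (if even c then 1 else -1)"
    using eps_block[OF qs s] Bdef by metis
  have hd: "hd es = 1" unfolding es using P1 by (simp add: upt_rec eps_def)
  have lt: "T < length es" unfolding es using TP P1 by simp
  have esT: "es ! T = -1" unfolding es using lt es eps_blk[of 1 T] Bstep[of 1] T_def by simp
  have nall: "\<not> (\<forall>e\<in>set es. e = hd es)" using esT lt hd by (metis nth_mem one_neq_neg_one)
  have tw: "takeWhile (\<lambda>e. e = hd es) es = take T es"
  proof (rule takeWhile_eq_take_P_nth)
    fix i assume "i < T" "i < length es"
    then show "es ! i = hd es" unfolding hd using eps_blk[of 0 i] B0 unfolding es T_def by simp
  next
    show "\<not> es ! T = hd es" using esT hd by simp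
  qed
  have ltw: "length (takeWhile (\<lambda>e. e = hd es) es) = T" using tw lt by simp
  have rot: "rotate T es = map (eps q p) [T..<T + 2 * P]"
    unfolding es using rot_upt[of "eps q p" "2 * P" T 0] eps_period[OF f(1)] P_def TP P1 by simp
  have cc: "[T..<T + 2 * P] = concat (map (\<lambda>c. [B c..<B (Suc c)]) [1..<2 * Q + 1])"
    using upt_concat[OF monoB, of 1 "2 * Q + 1"] BQ T_def by simp
  have blocks: "map (eps q p) [B c..<B (Suc c)] = replicate (B (Suc c) - B c) (if even c then 1 else -1)" for c
  proof -
    have "map (eps q p) [B c..<B (Suc c)] = map (\<lambda>_. (if even c then 1 else -1)) [B c..<B (Suc c)]"
      using eps_blk[of c] by (intro map_cong) auto
    then show ?thesis by (simp add: map_replicate_const)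
  qed
  have "runs (rotate T es) = map (\<lambda>c. B (Suc c) - B c) [1..<2 * Q + 1]"
    unfolding rot cc map_concat map_map comp_def blocks
    by (rule runs_blocks) (use Bstep in auto)
  also have "\<dots> = map (Df (1/s)) [1..<2 * nat q + 1]"
  proof -
    have "nat (Cf t (Suc c)) - nat (Cf t c) = nat (Cf t (Suc c) - Cf t c)" for c
      using Cf_nonneg[OF t0, of c] Cf_step[OF t1, of c] by (simp add: nat_diff_distrib)
    then show ?thesis unfolding Df_def B_def Q_def t_def by simp
  qed
  finally have "runs (rotate T es) = map (Df (1/s)) [1..<2 * nat q + 1]" .
  moreover have "CS s = runs (rotate T es)"
    unfolding CS_def CS_word_def Let_def es_def[symmetric] using nall ltw by auto
  ultimately show ?thesis by simp
qed



locale rdata =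
  fixes a :: nat and b :: int and m :: nat and e :: nat and f :: int
  assumes a2: "a \<ge> 2" and cop: "coprime (int a) b"
    and bm: "b = int m * int a + (b mod int a)" and bmod: "b mod int a \<noteq> 0"
    and e1: "1 \<le> e" and ea: "e < a" and ef: "int e * b = f * int a + 1"
begin

definition t where "t = (of_int b / of_nat a :: rat)"
definition H where "H c = (- (int c * b)) mod int a"

lemma a_pos: "int a > 0" using a2 by simp

lemma b_pos: "b > 0"
proof -
  have "b mod int a \<ge> 0" using a_pos pos_mod_sign by blast
  then have "b mod int a > 0" using bmod by simp
  then show ?thesis using bm by (smt (verit) mult_nonneg_nonneg of_nat_0_le_iff)
qed

lemma t_nonneg: "t \<ge> 0" unfolding t_def using b_pos by simp

lemma C_eq: "int a * Cf t c = int c * b + H c"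
proof -
  have "Cf t c = \<lceil>(of_int (int c * b) / of_int (int a) :: rat)\<rceil>" unfolding Cf_def t_def by simp
  also have "\<dots> = - \<lfloor>(of_int (- (int c * b)) / of_int (int a) :: rat)\<rfloor>"
    by (simp add: ceiling_def)
  also have "\<dots> = - ((- (int c * b)) div int a)" by (simp only: floor_divide_of_int_eq)
  finally have "Cf t c = - ((- (int c * b)) div int a)" .
  moreover have "int a * ((- (int c * b)) div int a) + H c = - (int c * b)"
    unfolding H_def by (metis mult_div_mod_eq)
  ultimately show ?thesis by (simp add: algebra_simps)
qed

lemma H_range: "0 \<le> H c" "H c < int a"
  unfolding H_def using a_pos by auto

lemma C_add: "Cf t (c + N * a) = Cf t c + int N * b"
proof -
  have "of_nat (c + N * a) * t = of_nat c * t + of_int (int N * b)"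
    unfolding t_def using a2 by (simp add: field_simps)
  then show ?thesis unfolding Cf_def using ceiling_add_of_int[of "of_nat c * t" "int N * b"] by simp
qed

lemma D_add: "Df t (c + N * a) = Df t c"
proof -
  have "Cf t (Suc c + N * a) = Cf t (Suc c) + int N * b" by (rule C_add)
  then show ?thesis unfolding Df_def using C_add[of c N] by simp
qed

lemma D_mod: "Df t c = Df t (c mod a)"
  using D_add[of "c mod a" "c div a"] by simp

lemma D_cong: "c mod a = c' mod a \<Longrightarrow> Df t c = Df t c'"
  using D_mod by metis

lemma D_period: "Df t (c + a) = Df t c"
  using D_add[of c 1] by simp

lemma H_zero: "H c = 0 \<longleftrightarrow> c mod a = 0"
proof -
  have "H c = 0 \<longleftrightarrow> int a dvd int c * b" unfolding H_def by (simp add: dvd_eq_mod_eq_0[symmetric])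
  also have "\<dots> \<longleftrightarrow> int a dvd int c" using cop coprime_dvd_mult_left_iff by blast
  also have "\<dots> \<longleftrightarrow> c mod a = 0" unfolding dvd_eq_mod_eq_0 zmod_int[symmetric] by simp
  finally show ?thesis .
qed

lemma H_shift: "c mod a \<noteq> 0 \<Longrightarrow> H (c + e) = H c - 1"
proof -
  assume c: "c mod a \<noteq> 0"
  have h1: "H c \<ge> 1" using H_zero[of c] c H_range[of c] by simp
  have eq: "- (int (c + e) * b) = (- (int c * b) - 1) + (- f) * int a"
    using ef by (simp add: algebra_simps)
  have "H (c + e) = (- (int c * b) - 1) mod int a" unfolding H_def by (subst eq) (rule mod_mult_self1)
  also have "\<dots> = (H c - 1) mod int a" unfolding H_def by (simp add: mod_diff_left_eq)
  also have "\<dots> = H c - 1" using h1 H_range[of c] by simp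
  finally show ?thesis .
qed

lemma CD: "int a * (Cf t (Suc c) - Cf t c) = b + H (Suc c) - H c"
  using C_eq[of "Suc c"] C_eq[of c] by (simp add: algebra_simps)

lemma D_int: "int (Df t c) = Cf t (Suc c) - Cf t c"
  unfolding Df_def using Cf_mono[OF t_nonneg, of c "Suc c"] by simp

lemma shiftL1:
  assumes "c mod a \<noteq> 0" "(Suc c) mod a \<noteq> 0"
  shows "Df t (c + e) = Df t c"
proof -
  have "int a * (Cf t (Suc (c + e)) - Cf t (c + e)) = int a * (Cf t (Suc c) - Cf t c)"
    using CD[of "c + e"] CD[of c] H_shift[OF assms(1)] H_shift[OF assms(2)] by simp
  then have "Cf t (Suc (c + e)) - Cf t (c + e) = Cf t (Suc c) - Cf t c" using a_pos by simp
  then show ?thesis unfolding Df_def by simp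
qed

lemma shiftL2:
  assumes "c mod a \<noteq> e" "(Suc c) mod a \<noteq> e"
  shows "Df t (c + (a - e)) = Df t c"
proof -
  have m1: "(c + (a - e)) mod a \<noteq> 0"
  proof
    assume "(c + (a - e)) mod a = 0"
    then have "(c + (a - e) + e) mod a = e mod a" by (metis mod_add_left_eq add_0)
    then have "c mod a = e" using ea by simp
    then show False using assms(1) by simp
  qed
  have m2: "(Suc (c + (a - e))) mod a \<noteq> 0"
  proof
    assume "(Suc (c + (a - e))) mod a = 0"
    then have "(Suc (c + (a - e)) + e) mod a = e mod a" by (metis mod_add_left_eq add_0)
    moreover have "Suc (c + (a - e)) + e = Suc c + a" using ea by simp
    ultimately have "(Suc c + a) mod a = e" using ea by simp
    then have "(Suc c) mod a = e" by (metis mod_add_self2)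
    then show False using assms(2) by simp
  qed
  have "Df t (c + (a - e) + e) = Df t (c + (a - e))" by (rule shiftL1[OF m1 m2])
  moreover have "Df t (c + (a - e) + e) = Df t c" using D_period[of c] ea by simp
  ultimately show ?thesis by simp
qed

lemma mod_eqI: "0 \<le> y \<Longrightarrow> y < (n::int) \<Longrightarrow> x = y + k * n \<Longrightarrow> x mod n = y"
  by simp

lemma C0: "Cf t 0 = 0" unfolding Cf_def by simp

lemma C1: "Cf t 1 = int m + 1"
proof -
  have r0: "b mod int a \<ge> 0" and r1: "b mod int a < int a" using a_pos pos_mod_sign pos_mod_bound by blast+
  have "H 1 = int a - b mod int a"
    unfolding H_def
    by (intro mod_eqI[where k = "- int m - 1"]) (use bm bmod r0 r1 in \<open>auto simp: algebra_simps\<close>)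
  then have "int a * Cf t 1 = int a * (int m + 1)" using C_eq[of 1] bm by (simp add: algebra_simps)
  then show ?thesis using a_pos by simp
qed

lemma Ce: "Cf t e = f + 1"
proof -
  have "H e = int a - 1"
    unfolding H_def using ef a2 by (intro mod_eqI[where k = "- f - 1"]) (auto simp: algebra_simps)
  then have "int a * Cf t e = int a * (f + 1)" using C_eq[of e] ef by (simp add: algebra_simps)
  then show ?thesis using a_pos by simp
qed

lemma Ce1: "Cf t (Suc e) = f + int m + 1"
proof -
  have "b mod int a \<ge> 0" "b mod int a < int a" using a_pos pos_mod_sign pos_mod_bound by blast+
  then have r: "0 < b mod int a" "b mod int a < int a" using bmod by auto
  have "H (Suc e) = int a - 1 - b mod int a"
    unfolding H_def using ef r
    by (intro mod_eqI[where k = "- f - int m - 1"]) (use bm in \<open>auto simp: algebra_simps\<close>)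
  then have "int a * Cf t (Suc e) = int a * (f + int m + 1)" using C_eq[of "Suc e"] ef bm
    by (simp add: algebra_simps)
  then show ?thesis using a_pos by simp
qed

lemma D0: "c mod a = 0 \<Longrightarrow> Df t c = m + 1"
  using D_mod[of c] C0 C1 unfolding Df_def by simp

lemma De: "c mod a = e \<Longrightarrow> Df t c = m"
  using D_mod[of c] Ce Ce1 unfolding Df_def by simp

end


lemma card3:
  assumes "finite S" "x \<in> S" "y \<in> S" "z \<in> S" "x \<noteq> y" "x \<noteq> z" "y \<noteq> z"
  shows "card S \<ge> 3"
proof -
  have "card {x, y, z} = 3" using assms by simp
  moreover have "card {x, y, z} \<le> card S" using assms by (intro card_mono) auto
  ultimately show ?thesis by simp
qed

context rdata
begin

abbreviation D where "D \<equiv> Df t"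

lemma take_rot:
  assumes "j < 2 * a" "l \<le> 2 * a"
  shows "take l (rotate j (map D [1..<2*a+1])) = map D [1+j..<1+j+l]"
proof -
  have per: "D (i + 2 * a) = D i" for i using D_add[of i 2] by (simp add: mult.commute)
  have "rotate j (map D [1..<1 + 2*a]) = map D [1+j..<1+j+2*a]"
    by (rule rot_upt[of D "2*a" j 1, OF per assms(1)])
  moreover have eq: "2*a+1 = 1 + 2*a" by simp
  ultimately have "rotate j (map D [1..<2*a+1]) = map D [1+j..<1+j+2*a]" by (simp only: eq)
  moreover have "take l [1+j..<1+j+2*a] = [1+j..<1+j+l]" by (rule take_upt) (use assms(2) in simp)
  ultimately show ?thesis by (simp only: take_map)
qed

lemma map_D_cong:
  assumes "x mod a = y mod a"
  shows "map D [x..<x+l] = map D [y..<y+l]"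
proof (rule nth_equalityI)
  fix i assume "i < length (map D [x..<x + l])"
  then have i: "i < l" by simp
  have "(x + i) mod a = (y + i) mod a" using assms by (metis mod_add_left_eq)
  then have "D (x + i) = D (y + i)" by (rule D_cong)
  then show "map D [x..<x + l] ! i = map D [y..<y + l] ! i" using i by simp
qed simp

lemma occ_window:
  assumes L: "L = map D [1..<2*a+1]" and occ: "cyc_occ L (map D [x..<x+l]) = 2" and l: "l \<le> 2 * a"
  shows "(\<exists>i<l. (x+i) mod a = e \<or> Suc (x+i) mod a = e) \<and> (\<exists>i<l. (x+i) mod a = 0 \<or> Suc (x+i) mod a = 0)"
proof -
  define W where "W = map D [x..<x+l]"
  define Occ where "Occ = {j. j < length L \<and> length W \<le> length L \<and> take (length W) (rotate j L) = W}"
  have lenL: "length L = 2 * a" using L by simp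
  have lenW: "length W = l" unfolding W_def by simp
  have cardOcc: "card Occ = 2" using occ unfolding cyc_occ_def Occ_def W_def .
  have fin: "finite Occ" unfolding Occ_def by simp
  have inOcc: "y \<in> Occ" if "y < 2 * a" "(1 + y) mod a = x mod a" for y
  proof -
    have "take l (rotate y L) = map D [1+y..<1+y+l]" using take_rot[OF that(1) l] L by simp
    also have "\<dots> = W" unfolding W_def using map_D_cong[OF that(2)] .
    finally show ?thesis unfolding Occ_def using lenL lenW that(1) l by simp
  qed
  define j0 where "j0 = (x + a - 1) mod a"
  have j0a: "j0 < a" unfolding j0_def using a2 by simp
  have j0x: "(1 + j0) mod a = x mod a"
  proof -
    have "(1 + j0) mod a = Suc (x + a - 1) mod a" unfolding j0_def by (simp add: mod_Suc_eq)
    also have "Suc (x + a - 1) = x + a" using a2 by simp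
    finally show ?thesis by simp
  qed
  have o1: "j0 \<in> Occ" using inOcc[of j0] j0a j0x by simp
  have "(1 + (j0 + a)) mod a = ((1 + j0) + a) mod a" by (simp only: add.assoc)
  also have "\<dots> = (1 + j0) mod a" by (rule mod_add_self2)
  finally have "(1 + (j0 + a)) mod a = x mod a" using j0x by simp
  then have o2: "j0 + a \<in> Occ" using inOcc[of "j0 + a"] j0a by simp
  have congi: "(1 + j0 + i) mod a = (x + i) mod a" for i using j0x by (metis mod_add_left_eq)
  have congi': "Suc (1 + j0 + i) mod a = Suc (x + i) mod a" for i
    using congi[of "Suc i"] by simp
  have part1: "\<exists>i<l. (x+i) mod a = e \<or> Suc (x+i) mod a = e"
  proof (rule ccontr)
    assume na: "\<not> ?thesis"
    define z where "z = j0 + (a - e)"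
    have z2: "z < 2 * a" unfolding z_def using j0a ea by simp
    have "take l (rotate z L) = map D [1+z..<1+z+l]" using take_rot[OF z2 l] L by simp
    also have "\<dots> = map D [1+j0..<1+j0+l]"
    proof (rule nth_equalityI)
      fix i assume "i < length (map D [1 + z..<1 + z + l])"
      then have i: "i < l" by (simp only: length_map length_upt)
      have "D (1 + j0 + i + (a - e)) = D (1 + j0 + i)"
        using shiftL2[of "1 + j0 + i"] na i congi congi' by auto
      then show "map D [1 + z..<1 + z + l] ! i = map D [1 + j0..<1 + j0 + l] ! i"
        using i unfolding z_def by (simp add: ac_simps del: upt_Suc)
    qed (simp del: upt_Suc)
    also have "\<dots> = W" unfolding W_def using map_D_cong[OF j0x] .
    finally have "z \<in> Occ" unfolding Occ_def using lenL lenW z2 l by simp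
    moreover have "z \<noteq> j0" "z \<noteq> j0 + a" unfolding z_def using ea e1 by auto
    ultimately have "card Occ \<ge> 3" using card3[OF fin o1 o2] j0a by auto
    then show False using cardOcc by simp
  qed
  have part2: "\<exists>i<l. (x+i) mod a = 0 \<or> Suc (x+i) mod a = 0"
  proof (rule ccontr)
    assume na: "\<not> ?thesis"
    define z where "z = j0 + e"
    have z2: "z < 2 * a" unfolding z_def using j0a ea by simp
    have "take l (rotate z L) = map D [1+z..<1+z+l]" using take_rot[OF z2 l] L by simp
    also have "\<dots> = map D [1+j0..<1+j0+l]"
    proof (rule nth_equalityI)
      fix i assume "i < length (map D [1 + z..<1 + z + l])"
      then have i: "i < l" by (simp only: length_map length_upt)
      have "D (1 + j0 + i + e) = D (1 + j0 + i)"
        using shiftL1[of "1 + j0 + i"] na i congi congi' by auto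
      then show "map D [1 + z..<1 + z + l] ! i = map D [1 + j0..<1 + j0 + l] ! i"
        using i unfolding z_def by (simp add: ac_simps del: upt_Suc)
    qed (simp del: upt_Suc)
    also have "\<dots> = W" unfolding W_def using map_D_cong[OF j0x] .
    finally have "z \<in> Occ" unfolding Occ_def using lenL lenW z2 l by simp
    moreover have "z \<noteq> j0" "z \<noteq> j0 + a" unfolding z_def using ea e1 by auto
    ultimately have "card Occ \<ge> 3" using card3[OF fin o1 o2] j0a by auto
    then show False using cardOcc by simp
  qed
  show ?thesis using part1 part2 by blast
qed

lemma window_arith:
  assumes l1: "0 < l1" "l1 < a" and v: "v < a"
    and w1: "\<exists>i<l1. (x+i) mod a = v \<or> Suc (x+i) mod a = v"
    and w2: "\<exists>i<a - l1. (x+l1+i) mod a = v \<or> Suc (x+l1+i) mod a = v"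
  shows "x mod a = v \<or> (x + l1) mod a = v"
proof -
  obtain d1 where d1: "d1 \<le> l1" "(x + d1) mod a = v"
  proof -
    obtain i where i: "i < l1" "(x+i) mod a = v \<or> Suc (x+i) mod a = v" using w1 by blast
    show ?thesis
    proof (cases "(x+i) mod a = v")
      case True then show ?thesis using that[of i] i by simp
    next
      case False then show ?thesis using that[of "i + 1"] i by simp
    qed
  qed
  obtain d2 where d2: "l1 \<le> d2" "d2 \<le> a" "(x + d2) mod a = v"
  proof -
    obtain i where i: "i < a - l1" "(x+l1+i) mod a = v \<or> Suc (x+l1+i) mod a = v" using w2 by blast
    show ?thesis
    proof (cases "(x+l1+i) mod a = v")
      case True then show ?thesis using that[of "l1 + i"] i by (simp add: add.assoc)
    next
      case False then show ?thesis using that[of "l1 + i + 1"] i by (simp add: add.assoc)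
    qed
  qed
  have le: "d1 \<le> d2" using d1 d2 by simp
  have "(x + d1) mod a = (x + d2) mod a" using d1 d2 by simp
  then have "a dvd (x + d2) - (x + d1)" using le mod_eq_dvd_iff_nat[of "x + d1" "x + d2" a] by simp
  then have dv: "a dvd d2 - d1" by simp
  have "d2 - d1 \<le> a" using d2 by simp
  moreover obtain k where k: "d2 - d1 = a * k" using dv by blast
  ultimately have "a * k \<le> a * 1" by simp
  then have "k \<le> 1" using a2 by simp
  then have "k = 0 \<or> k = 1" by auto
  then have "d2 - d1 = 0 \<or> d2 - d1 = a" using k by auto
  then show ?thesis
  proof
    assume "d2 - d1 = 0"
    then have "d1 = l1" using le d1 d2 by simp
    then show ?thesis using d1 by simp
  next
    assume "d2 - d1 = a"
    then have "d1 = 0" using d2 le by simp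
    then show ?thesis using d1 by simp
  qed
qed

end


fun nd :: "nat list \<Rightarrow> int \<times> int \<Rightarrow> int \<times> int" where
  "nd [] v = v"
| "nd (m # ms) v = (snd (nd ms v), int m * snd (nd ms v) + fst (nd ms v))"

lemma nd_append: "nd (xs @ ys) v = nd xs (nd ys v)"
  by (induction xs) auto

lemma nd_lin: "nd xs (A, B) = (A * fst (nd xs (1,0)) + B * fst (nd xs (0,1)),
                               A * snd (nd xs (1,0)) + B * snd (nd xs (0,1)))"
  by (induction xs) (auto simp: algebra_simps)

lemma nd_det: "fst (nd xs (1,0)) * snd (nd xs (0,1)) - fst (nd xs (0,1)) * snd (nd xs (1,0)) = (-1) ^ length xs"
proof (induction xs)
  case Nil then show ?case by simp
next
  case (Cons m xs)
  then show ?case by (simp add: algebra_simps)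
qed

lemma cf_nd:
  assumes "\<forall>x\<in>set xs. x > 0" "A \<ge> 0" "B > 0" "cf ys = of_int A / of_int B"
  shows "fst (nd xs (A,B)) \<ge> 0 \<and> snd (nd xs (A,B)) > 0 \<and>
         cf (xs @ ys) = of_int (fst (nd xs (A,B))) / of_int (snd (nd xs (A,B)))"
  using assms(1)
proof (induction xs)
  case Nil then show ?case using assms by simp
next
  case (Cons m xs)
  define a where "a = fst (nd xs (A,B))"
  define b where "b = snd (nd xs (A,B))"
  have ih: "a \<ge> 0" "b > 0" "cf (xs @ ys) = of_int a / of_int b" using Cons unfolding a_def b_def by auto
  have m: "m > 0" using Cons by simp
  have "int m * b \<ge> 1 * b" using m ih(2) by (intro mult_right_mono) auto
  then have pos: "int m * b + a > 0" using ih by linarith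
  have "cf ((m # xs) @ ys) = 1 / (of_nat m + of_int a / of_int b)" using ih by simp
  also have "\<dots> = of_int b / of_int (int m * b + a)" using ih(2) pos
    by (simp add: field_simps)
  finally show ?case using ih pos by (simp add: a_def[symmetric] b_def[symmetric])
qed

lemma nd_bounds:
  assumes "xs \<noteq> []" "\<forall>x\<in>set xs. x > 0" "last xs \<ge> 2"
  shows "0 \<le> fst (nd xs (1,0)) \<and> fst (nd xs (1,0)) < fst (nd xs (0,1)) \<and> 1 \<le> fst (nd xs (0,1)) \<and>
         fst (nd xs (0,1)) < snd (nd xs (0,1)) \<and> 0 < snd (nd xs (1,0)) \<and> snd (nd xs (1,0)) < snd (nd xs (0,1))"
  using assms
proof (induction xs)
  case Nil then show ?case by simp
next
  case (Cons m xs)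
  show ?case
  proof (cases "xs = []")
    case True then show ?thesis using Cons by simp
  next
    case False
    then have ih: "0 \<le> fst (nd xs (1,0)) \<and> fst (nd xs (1,0)) < fst (nd xs (0,1)) \<and> 1 \<le> fst (nd xs (0,1)) \<and>
         fst (nd xs (0,1)) < snd (nd xs (0,1)) \<and> 0 < snd (nd xs (1,0)) \<and> snd (nd xs (1,0)) < snd (nd xs (0,1))"
      using Cons by simp
    have m: "int m \<ge> 1" using Cons by simp
    have "int m * snd (nd xs (1, 0)) \<le> int m * snd (nd xs (0, 1))" using ih m by (intro mult_left_mono) auto
    moreover have "int m * snd (nd xs (1, 0)) \<ge> 1 * snd (nd xs (1, 0))" using ih m by (intro mult_right_mono) auto
    moreover have "int m * snd (nd xs (0, 1)) \<ge> 1 * snd (nd xs (0, 1))" using ih m by (intro mult_right_mono) auto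
    ultimately show ?thesis using ih by (simp; intro conjI; linarith)
  qed
qed

lemma quotient_of_intdiv:
  assumes "coprime a b" "b > 0"
  shows "quotient_of (of_int a / of_int b) = (a, b)"
  using assms by (metis Fract_of_int_quotient normalize_stable quotient_of_Fract)



lemma Cf_add_int:
  assumes "of_nat N * t = of_int z"
  shows "Cf t (c + N) = Cf t c + z"
proof -
  have "of_nat (c + N) * t = of_nat c * t + of_int z" using assms by (simp add: algebra_simps)
  then show ?thesis unfolding Cf_def by simp
qed

lemma take_rot_gen:
  assumes per: "\<And>i. f (i + N) = f i" and "j < N" "l \<le> N"
  shows "take l (rotate j (map f [1..<N+1])) = map f [1+j..<1+j+l]"
proof -
  have "rotate j (map f [1..<1 + N]) = map f [1+j..<1+j+N]"
    by (rule rot_upt[of f N j 1, OF per assms(2)])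
  moreover have eq: "N+1 = 1 + N" by simp
  ultimately have "rotate j (map f [1..<N+1]) = map f [1+j..<1+j+N]" by (simp only: eq)
  moreover have "take l [1+j..<1+j+N] = [1+j..<1+j+l]" by (rule take_upt) (use assms(3) in simp)
  ultimately show ?thesis by (simp only: take_map)
qed

lemma telesc:
  assumes "k1 \<le> k2"
  shows "(\<Sum>i = k1..<k2. (G (Suc (z + i)) - G (z + i) :: int)) = G (z + k2) - G (z + k1)"
  using sum_Suc_diff'[OF assms, of "\<lambda>i. G (z + i)"] by simp

lemma s_side:
  assumes s: "0 < s" "s \<le> 1"
    and cc: "cyc_contains (CS s) (map F [z..<z+len])"
    and k: "k1 \<le> k2" "k2 \<le> len"
    and hF: "\<And>c. int (F c) = G (Suc c) - G c"
  shows "of_int (G (z+k2) - G (z+k1)) < of_nat (k2 - k1) * (1/s) + 1 \<and>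
         of_int (G (z+k2) - G (z+k1)) > of_nat (k2 - k1) * (1/s) - 1"
proof -
  obtain q p where qs: "quotient_of s = (q, p)" by (cases "quotient_of s") auto
  note f = qs_facts[OF qs s]
  define ts where "ts = 1 / s"
  define Q where "Q = nat q"
  have ts0: "ts \<ge> 0" using s unfolding ts_def by simp
  have CSs: "CS s = map (Df ts) [1..<2 * Q + 1]" using CS_formula[OF qs s] unfolding ts_def Q_def .
  have Qt: "of_nat (2 * Q) * ts = of_int (2 * p)" unfolding Q_def f(5)[folded ts_def] using f(2) by simp
  have per: "Df ts (i + 2 * Q) = Df ts i" for i
    unfolding Df_def using Cf_add_int[OF Qt, of i] Cf_add_int[OF Qt, of "Suc i"] by simp
  obtain j where j: "j < 2 * Q" "len \<le> 2 * Q" "take len (rotate j (CS s)) = map F [z..<z+len]"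
    using cc unfolding cyc_contains_def CSs by (auto simp del: upt_Suc)
  define y where "y = 1 + j"
  have eqs: "map (Df ts) [y..<y+len] = map F [z..<z+len]"
    using j take_rot_gen[of "Df ts" "2 * Q" j len, OF per j(1) j(2)] CSs unfolding y_def by (simp del: upt_Suc)
  have pt: "Df ts (y + i) = F (z + i)" if "i < len" for i
  proof -
    have "map (Df ts) [y..<y+len] ! i = map F [z..<z+len] ! i" using eqs by (simp del: upt_Suc)
    then show ?thesis using that by simp
  qed
  have "(\<Sum>i = k1..<k2. int (Df ts (y + i))) = (\<Sum>i = k1..<k2. int (F (z + i)))"
    using pt k by (intro sum.cong) auto
  also have "\<dots> = G (z+k2) - G (z+k1)" using hF telesc[OF k(1), of G z] by simp
  finally have "G (z+k2) - G (z+k1) = (\<Sum>i = k1..<k2. int (Df ts (y + i)))" by simp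
  also have "\<dots> = (\<Sum>i = k1..<k2. Cf ts (Suc (y + i)) - Cf ts (y + i))"
    using Cf_mono[OF ts0] by (intro sum.cong) (auto simp: Df_def)
  also have "\<dots> = Cf ts (y + k2) - Cf ts (y + k1)" by (rule telesc[OF k(1)])
  finally have G: "G (z+k2) - G (z+k1) = Cf ts (y + k2) - Cf ts (y + k1)" .
  have c1: "of_nat (y+k2) * ts \<le> of_int (Cf ts (y+k2))" "of_int (Cf ts (y+k2)) < of_nat (y+k2) * ts + 1"
    unfolding Cf_def using ceiling_correct[of "of_nat (y+k2) * ts"] by linarith+
  have c2: "of_nat (y+k1) * ts \<le> of_int (Cf ts (y+k1))" "of_int (Cf ts (y+k1)) < of_nat (y+k1) * ts + 1"
    unfolding Cf_def using ceiling_correct[of "of_nat (y+k1) * ts"] by linarith+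
  have d: "of_nat (k2 - k1) * ts = of_nat (y+k2) * ts - of_nat (y+k1) * ts"
    using k by (simp add: of_nat_diff algebra_simps)
  show ?thesis unfolding G ts_def[symmetric] using c1 c2 d by simp
qed

lemma cf_le1: "\<forall>x\<in>set xs. x > 0 \<Longrightarrow> 0 \<le> cf xs \<and> cf xs \<le> 1"
proof (induction xs)
  case Nil then show ?case by simp
next
  case (Cons x xs)
  then have "1 \<le> of_nat x + cf xs" by simp
  then show ?case by simp
qed

lemma CS_zero: "CS 0 = [2]"
  by (simp add: CS_def CS_word_def u_word_def hat_u_def winv_def rat_zero_code)



context rdata
begin

lemma map_D_app:
  assumes "w mod a = (y + l) mod a"
  shows "map D [y..<y+l] @ map D [w..<w+l'] = map D [y..<y+l+l']"
proof -
  have "map D [w..<w+l'] = map D [y+l..<y+l+l']" using map_D_cong[OF assms] .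
  moreover have "[y..<y+l+l'] = [y..<y+l] @ [y+l..<y+l+l']" using upt_add_eq_append[of y "y+l" l'] by simp
  ultimately show ?thesis by simp
qed

lemma concat_rep: "concat (replicate N (map D [y..<y+a])) = map D [y..<y+N*a]"
proof (induction N)
  case 0 then show ?case by simp
next
  case (Suc N)
  have "concat (replicate (Suc N) (map D [y..<y+a])) = concat (replicate N (map D [y..<y+a])) @ map D [y..<y+a]"
    by (simp add: replicate_append_same[symmetric])
  also have "\<dots> = map D [y..<y+N*a] @ map D [y..<y+a]" using Suc by simp
  also have "\<dots> = map D [y..<y+N*a+a]" by (rule map_D_app) simp
  finally show ?case by (simp add: add.commute add.left_commute)
qed

lemma C_Na: "Cf t (N * a) = int N * b"
  using C_add[of 0 N] C0 by simp

lemma C_eNa: "Cf t (e + N * a) = f + 1 + int N * b"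
  using C_add[of e N] Ce by simp

end

lemma rat_le_div:
  fixes s X Y :: rat
  assumes "0 < s" "0 < Y" "s \<le> X / Y"
  shows "Y \<le> X * (1/s)"
proof -
  have "s * Y \<le> X" using assms by (simp add: le_divide_eq)
  then show ?thesis using assms(1) by (simp add: le_divide_eq mult.commute)
qed

lemma rat_less_div:
  fixes s X Y :: rat
  assumes "0 < s" "0 < Y" "s < X / Y"
  shows "Y < X * (1/s)"
proof -
  have "s * Y < X" using assms by (simp add: less_divide_eq)
  then show ?thesis using assms(1) by (simp add: less_divide_eq mult.commute)
qed

lemma rat_ge_div:
  fixes s X Y :: rat
  assumes "0 < s" "0 < Y" "X / Y \<le> s"
  shows "X * (1/s) \<le> Y"
proof -
  have "X \<le> s * Y" using assms by (simp add: divide_le_eq)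
  then show ?thesis using assms(1) by (simp add: divide_le_eq mult.commute)
qed

lemma rat_gt_div:
  fixes s X Y :: rat
  assumes "0 < s" "0 < Y" "X / Y < s"
  shows "X * (1/s) < Y"
proof -
  have "X < s * Y" using assms by (simp add: divide_less_eq)
  then show ?thesis using assms(1) by (simp add: divide_less_eq mult.commute)
qed



declare upt_Suc[simp del]

theorem lemma2p1:
  fixes r :: rat and ms :: "nat list" and n :: nat and S1 S2 :: "nat list"
  assumes "0 < r" "r < 1"
    and "\<forall>p::nat. p \<ge> 2 \<longrightarrow> r \<noteq> 1 / of_nat p"
    and "length ms \<ge> 2" "\<forall>x\<in>set ms. x > 0" "last ms \<ge> 2"
    and "r = cf ms"
    and "n \<ge> 2"
    and "is_CS_decomp (hd ms) (CS r) S1 S2"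
  shows "\<forall>s \<in> I1 ms n \<union> I2 ms n.
           (even (length ms) \<longrightarrow> \<not> cyc_contains (CS s) (drep (2 * n - 2) S1 S2 @ S1)) \<and>
           (odd (length ms) \<longrightarrow> \<not> cyc_contains (CS s) (drep (2 * n - 2) S2 S1 @ S2))"
proof -
  note pos = assms(5)
  obtain m rest where ms: "ms = m # rest" using assms(4) by (cases ms) auto
  have rest: "rest \<noteq> []" using assms(4) ms by auto
  have hdms: "hd ms = m" using ms by simp
  have posr: "\<forall>x\<in>set rest. x > 0" using pos ms by simp
  have lastr: "last rest \<ge> 2" using assms(6) ms rest by simp
  define A1 where "A1 = fst (nd ms (1,0))"
  define A2 where "A2 = fst (nd ms (0,1))"
  define B1 where "B1 = snd (nd ms (1,0))"
  define B2 where "B2 = snd (nd ms (0,1))"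
  have bnd: "0 \<le> A1" "A1 < A2" "1 \<le> A2" "A2 < B2" "0 < B1" "B1 < B2"
    using nd_bounds[of ms] ms pos assms(6) unfolding A1_def A2_def B1_def B2_def by auto
  have bndr: "0 < snd (nd rest (1,0))" "1 \<le> fst (nd rest (0,1))" "fst (nd rest (0,1)) < snd (nd rest (0,1))"
    using nd_bounds[OF rest posr lastr] by auto
  have A1r: "A1 = snd (nd rest (1,0))" unfolding A1_def ms by simp
  have A2r: "A2 = snd (nd rest (0,1))" unfolding A2_def ms by simp
  have B2r: "B2 = int m * A2 + fst (nd rest (0,1))" unfolding B2_def A2r ms by simp
  have A1pos: "A1 \<ge> 1" using A1r bndr by simp
  have det: "A1 * B2 - A2 * B1 = (-1) ^ length ms" unfolding A1_def A2_def B1_def B2_def by (rule nd_det)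
  have rAB: "r = of_int A2 / of_int B2"
    using cf_nd[OF pos, of 0 1 "[]"] assms(7) unfolding A2_def B2_def by simp
  have cop: "coprime A2 B2"
  proof (rule coprimeI)
    fix c assume "c dvd A2" "c dvd B2"
    then have "c dvd A1 * B2 - A2 * B1" by simp
    then have "c dvd (-1) ^ length ms" using det by simp
    moreover have "is_unit ((-1::int) ^ length ms)" by (simp add: is_unit_power_iff)
    ultimately show "is_unit c" by (rule dvd_unit_imp_unit)
  qed
  define a where "a = nat A2"
  define b where "b = B2"
  have a_int: "int a = A2" using bnd unfolding a_def by simp
  have a2: "a \<ge> 2" using bnd A1pos a_int by simp
  define N0 where "N0 = 2 * n - 2"
  have N0: "N0 \<ge> 2" using assms(8) unfolding N0_def by simp
  define e where "e = (if even (length ms) then nat A1 else nat (A2 - A1))"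
  define f where "f = (if even (length ms) then B1 else B2 - B1)"
  have e_int: "int e = (if even (length ms) then A1 else A2 - A1)" unfolding e_def using bnd by simp
  have ef: "int e * b = f * int a + 1"
  proof (cases "even (length ms)")
    case True
    then have "A1 * B2 - A2 * B1 = 1" using det by simp
    then show ?thesis using True unfolding e_int f_def b_def a_int by (simp add: algebra_simps)
  next
    case False
    then have "A1 * B2 - A2 * B1 = -1" using det by simp
    then show ?thesis using False unfolding e_int f_def b_def a_int by (simp add: algebra_simps)
  qed
  have e1: "1 \<le> e" and ea: "e < a"
    using e_int bnd A1pos a_int by (auto split: if_splits)
  have bX: "b = fst (nd rest (0,1)) + int m * int a" unfolding b_def B2r a_int by simp
  have bmod: "b mod int a = fst (nd rest (0,1))"
  proof -
    from bX have "b mod int a = fst (nd rest (0,1)) mod int a" by simp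
    also have "\<dots> = fst (nd rest (0,1))" by (rule mod_pos_pos_trivial) (use bndr A2r a_int in auto)
    finally show ?thesis .
  qed
  have bm: "b = int m * int a + (b mod int a)" using bX bmod by simp
  have bm0: "b mod int a \<noteq> 0" using bmod bndr by simp
  have copab: "coprime (int a) b" using cop a_int b_def by simp
  interpret R: rdata a b m e f
    by unfold_locales (use a2 copab bm bm0 e1 ea ef in auto)
  have tr: "1 / r = R.t"
  proof -
    have "R.t = of_int b / of_nat a" by (rule R.t_def)
    moreover have "(of_nat a :: rat) = of_int A2" using a_int by (metis of_int_of_nat_eq)
    ultimately show ?thesis unfolding rAB b_def by simp
  qed
  have qr: "quotient_of r = (A2, B2)" unfolding rAB using quotient_of_intdiv[OF cop] bnd by simp
  have CSr: "CS r = map R.D [1..<2*a+1]"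
    using CS_formula[OF qr assms(1)] assms(2) tr a_def by simp
  obtain j where rj: "rotate j (CS r) = S1 @ S2 @ S1 @ S2"
    and S1ne: "S1 \<noteq> []" and S2ne: "S2 \<noteq> []"
    and occ1: "cyc_occ (CS r) S1 = 2" and occ2: "cyc_occ (CS r) S2 = 2"
    and hd1: "hd S1 = m + 1" and hd2: "hd S2 = m"
    using assms(9) unfolding is_CS_decomp_def hdms by blast
  define j' where "j' = j mod (2 * a)"
  have j': "j' < 2 * a" unfolding j'_def using a2 by simp
  have lenCS: "length (CS r) = 2 * a" unfolding CSr by (simp only: length_map length_upt)
  have "rotate j (CS r) = rotate j' (CS r)" unfolding j'_def using rotate_conv_mod[of j "CS r"] lenCS by simp
  also have "\<dots> = take (2*a) (rotate j' (CS r))" unfolding CSr by simp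
  also have "\<dots> = map R.D [1+j'..<1+j'+2*a]" unfolding CSr by (rule R.take_rot[OF j']) simp
  finally have rot: "S1 @ S2 @ S1 @ S2 = map R.D [1+j'..<1+j'+2*a]" using rj by simp
  define x where "x = 1 + j'"
  define l1 where "l1 = length S1"
  have len: "2 * (length S1 + length S2) = 2 * a" using arg_cong[OF rot, of length] by simp
  then have l12: "l1 + length S2 = a" unfolding l1_def by simp
  have l1a: "0 < l1" "l1 < a" using S1ne S2ne l12 unfolding l1_def by auto
  have S12: "S1 @ S2 = map R.D [x..<x+a]"
  proof -
    have "S1 @ S2 = take a (S1 @ S2 @ S1 @ S2)" using l12 l1_def by simp
    also have "\<dots> = map R.D [x..<x+a]" unfolding rot x_def by (simp add: take_map del: upt_Suc)
    finally show ?thesis .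
  qed
  have S1eq: "S1 = map R.D [x..<x+l1]"
  proof -
    have "S1 = take l1 (S1 @ S2)" unfolding l1_def by simp
    then show ?thesis unfolding S12 using l1a by (simp add: take_map del: upt_Suc)
  qed
  have S2eq: "S2 = map R.D [x+l1..<x+l1+(a-l1)]"
  proof -
    have "S2 = drop l1 (S1 @ S2)" unfolding l1_def by simp
    then show ?thesis unfolding S12 using l1a by (simp add: drop_map del: upt_Suc)
  qed
  have w1: "(\<exists>i<l1. (x+i) mod a = e \<or> Suc (x+i) mod a = e) \<and> (\<exists>i<l1. (x+i) mod a = 0 \<or> Suc (x+i) mod a = 0)"
    using R.occ_window[OF CSr, of x l1] occ1 S1eq l1a by simp
  have w2: "(\<exists>i<a-l1. (x+l1+i) mod a = e \<or> Suc (x+l1+i) mod a = e) \<and> (\<exists>i<a-l1. (x+l1+i) mod a = 0 \<or> Suc (x+l1+i) mod a = 0)"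
    using R.occ_window[OF CSr, of "x+l1" "a-l1"] occ2 S2eq l1a by simp
  have we: "x mod a = e \<or> (x + l1) mod a = e"
    using R.window_arith[OF l1a ea] w1 w2 by blast
  have w0: "x mod a = 0 \<or> (x + l1) mod a = 0"
    using R.window_arith[OF l1a, of 0] w1 w2 a2 by simp
  have Dx: "R.D x = m + 1" using hd1 S1eq l1a by (simp add: upt_rec)
  have Dxl: "R.D (x + l1) = m" using hd2 S2eq l1a by (simp add: upt_rec)
  have xe: "(x + l1) mod a = e" using we R.De[of x] Dx by auto
  have x0: "x mod a = 0" using w0 R.D0[of "x + l1"] Dxl by auto
  have l1e: "l1 = e"
  proof -
    have "(x + l1) mod a = l1 mod a" using x0 by (metis add_0 mod_add_left_eq)
    then show ?thesis using xe l1a by simp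
  qed
  define len where "len = (if even (length ms) then N0 * a + e else N0 * a + (a - e))"
  define z0 where "z0 = (if even (length ms) then 0 else e)"
  define Pat where "Pat = (if even (length ms) then drep N0 S1 S2 @ S1 else drep N0 S2 S1 @ S2)"
  have Pat: "Pat = map R.D [z0..<z0+len]"
  proof (cases "even (length ms)")
    case True
    have dr: "drep N0 S1 S2 = map R.D [x..<x+N0*a]" unfolding drep_def S12 R.concat_rep ..
    have "drep N0 S1 S2 @ S1 = map R.D [x..<x+N0*a] @ map R.D [x..<x+e]"
      unfolding dr using S1eq l1e by simp
    also have "\<dots> = map R.D [x..<x+N0*a+e]" by (rule R.map_D_app) simp
    also have "\<dots> = map R.D [0..<0+(N0*a+e)]" using R.map_D_cong[of x 0 "N0*a+e"] x0 by (simp add: add.assoc)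
    finally show ?thesis using True unfolding Pat_def z0_def len_def by simp
  next
    case False
    have S2e: "S2 = map R.D [x+e..<x+e+(a-e)]" using S2eq l1e by simp
    have S1e: "S1 = map R.D [x..<x+e]" using S1eq l1e by simp
    have "S2 @ S1 = map R.D [x+e..<x+e+(a-e)+e]" unfolding S2e S1e
      by (rule R.map_D_app) (use ea in simp)
    also have "x+e+(a-e)+e = x+e+a" using ea by simp
    finally have S21: "S2 @ S1 = map R.D [x+e..<x+e+a]" .
    have dr: "drep N0 S2 S1 = map R.D [x+e..<x+e+N0*a]" unfolding drep_def S21 R.concat_rep ..
    have "drep N0 S2 S1 @ S2 = map R.D [x+e..<x+e+N0*a] @ map R.D [x+e..<x+e+(a-e)]"
      unfolding dr using S2e by simp
    also have "\<dots> = map R.D [x+e..<x+e+N0*a+(a-e)]" by (rule R.map_D_app) simp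
    also have "\<dots> = map R.D [e..<e+(N0*a+(a-e))]"
    proof -
      have "(x + e) mod a = e mod a" using x0 mod_add_left_eq[of x a e] by simp
      then show ?thesis using R.map_D_cong[of "x+e" e "N0*a+(a-e)"] by (simp add: add.assoc)
    qed
    finally show ?thesis using False unfolding Pat_def z0_def len_def by simp
  qed
  have Na: "2 * a \<le> N0 * a" using N0 by (rule mult_le_mono1)
  have l: "len = N0*a + e \<or> len = N0*a + (a-e)" unfolding len_def by simp
  have len2a: "2 * a \<le> len"
    using l
  proof
    assume "len = N0*a + e" with Na show ?thesis by linarith
  next
    assume "len = N0*a + (a-e)" with Na show ?thesis by linarith
  qed
  have lenge: "len \<ge> 2" using len2a a2 by simp
  have key: "\<not> cyc_contains (CS s) Pat" if sI: "s \<in> I1 ms n \<union> I2 ms n" for s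
  proof
    assume cc: "cyc_contains (CS s) Pat"
    have cc': "cyc_contains (CS s) (map R.D [z0..<z0+len])" using cc Pat by simp
    have posb: "\<forall>x\<in>set (butlast ms @ [last ms - 1, 2]). x > 0"
      using pos assms(6) by (auto dest: in_set_butlastD)
    have posc: "\<forall>x\<in>set (ms @ [N0]). x > 0" using pos N0 by auto
    have bend: "cf (butlast ms @ [last ms - 1, 2]) = of_int (2*A2 - A1) / of_int (2*B2 - B1)"
    proof -
      define ns where "ns = butlast ms"
      define mk where "mk = last ms"
      have msd: "ms = ns @ [mk]" unfolding ns_def mk_def using ms by simp
      have posns: "\<forall>x\<in>set ns. x > 0" using pos unfolding ns_def by (auto dest: in_set_butlastD)
      have mk2: "mk \<ge> 2" using assms(6) mk_def by simp
      have cfy: "cf [mk - 1, 2] = of_int 2 / of_int (2 * int mk - 1)"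
      proof -
        have "cf [mk - 1, 2] = 1 / (of_nat (mk - 1) + 1 / 2)" by simp
        also have "of_nat (mk - 1) = (of_nat mk - 1 :: rat)" using mk2 by (simp add: of_nat_diff)
        finally show ?thesis using mk2 by (simp add: field_simps)
      qed
      have h: "cf (ns @ [mk - 1, 2]) = of_int (fst (nd ns (2, 2 * int mk - 1))) / of_int (snd (nd ns (2, 2 * int mk - 1)))"
        using cf_nd[OF posns, of 2 "2 * int mk - 1" "[mk - 1, 2]"] cfy mk2 by simp
      have A1e: "A1 = fst (nd ns (0,1))" unfolding A1_def msd nd_append by simp
      have B1e: "B1 = snd (nd ns (0,1))" unfolding B1_def msd nd_append by simp
      have A2e: "A2 = fst (nd ns (1, int mk))" unfolding A2_def msd nd_append by simp
      have B2e: "B2 = snd (nd ns (1, int mk))" unfolding B2_def msd nd_append by simp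
      show ?thesis unfolding ns_def[symmetric] mk_def[symmetric] h A1e B1e A2e B2e
        by (subst (1 2 3 4) nd_lin) (simp add: algebra_simps)
    qed
    have cend: "cf (ms @ [N0]) = of_int (A1 + int N0 * A2) / of_int (B1 + int N0 * B2)"
    proof -
      have "cf [N0] = of_int 1 / of_int (int N0)" by simp
      then have "cf (ms @ [N0]) = of_int (fst (nd ms (1, int N0))) / of_int (snd (nd ms (1, int N0)))"
        using cf_nd[OF pos, of 1 "int N0" "[N0]"] N0 by simp
      then show ?thesis unfolding A1_def A2_def B1_def B2_def by (subst (asm) (1 2) nd_lin) simp
    qed
    have bend01: "cf (butlast ms @ [last ms - 1, 2]) \<le> 1" using cf_le1[OF posb] by simp
    have cend01: "cf (ms @ [N0]) \<le> 1" using cf_le1[OF posc] by simp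
    have I1e: "I1 ms n = (if even (length ms) then {0 .. cf (butlast ms @ [last ms - 1, 2])}
                        else {0 ..< cf (ms @ [N0])})" unfolding I1_def N0_def ..
    have I2e: "I2 ms n = (if even (length ms) then {cf (ms @ [N0]) <.. 1}
                        else {cf (butlast ms @ [last ms - 1, 2]) .. 1})" unfolding I2_def N0_def ..
    have s01: "0 \<le> s" "s \<le> 1" using sI bend01 cend01 cf_le1[OF posb] cf_le1[OF posc] unfolding I1e I2e
      by (auto split: if_splits)
    show False
    proof (cases "s = 0")
      case True
      then show False using cc lenge unfolding Pat CS_zero True cyc_contains_def by simp
    next
      case False
      then have s0: "0 < s" using s01 by simp
      have sside: "of_int (Cf R.t (z0+k2) - Cf R.t (z0+k1)) < of_nat (k2 - k1) * (1/s) + 1 \<and>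
         of_int (Cf R.t (z0+k2) - Cf R.t (z0+k1)) > of_nat (k2 - k1) * (1/s) - 1"
        if "k1 \<le> k2" "k2 \<le> len" for k1 k2
        by (rule s_side[OF s0 s01(2) cc' that R.D_int])
      have ia: "(of_nat a :: rat) = of_int A2" using a_int by (metis of_int_of_nat_eq)
      have bB: "b = B2" unfolding b_def ..
      show False
      proof (cases "even (length ms)")
        case ev: True
        have z0: "z0 = 0" and lenv: "len = N0 * a + e" using ev unfolding z0_def len_def by auto
        have eA: "int e = A1" and fB: "f = B1" using ev e_int unfolding f_def by auto
        show False
        proof (cases "s \<in> I1 ms n")
          case True
          then have sle: "s \<le> of_int (2*A2 - A1) / of_int (2*B2 - B1)" using ev bend unfolding I1e by simp
          have Y: "of_int (2*B2 - B1) \<le> of_int (2*A2 - A1) * (1/s)"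
            by (rule rat_le_div[OF s0 _ sle]) (use bnd in simp)
          have "of_int (Cf R.t (z0+2*a) - Cf R.t (z0+e)) > of_nat (2*a - e) * (1/s) - 1"
            using sside[of e "2*a"] ea len2a by simp
          moreover have "Cf R.t (z0+2*a) = 2 * b" using R.C_Na[of 2] z0 by simp
          moreover have "Cf R.t (z0+e) = f + 1" using R.Ce z0 by simp
          moreover have "(of_nat (2*a - e) :: rat) = of_int (2*A2 - A1)"
            using ea a_int eA by (simp add: of_nat_diff)
          ultimately have "of_int (2*b - f) > of_int (2*A2 - A1) * (1/s)" by simp
          then show False using Y bB fB by simp
        next
          case False
          then have "s \<in> I2 ms n" using sI by simp
          then have sgt: "of_int (A1 + int N0 * A2) / of_int (B1 + int N0 * B2) < s" using ev cend unfolding I2e by simp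
          have Y: "of_int (A1 + int N0 * A2) * (1/s) < of_int (B1 + int N0 * B2)"
            by (rule rat_gt_div[OF s0 _ sgt], rule of_int_pos) (use bnd in \<open>intro add_pos_nonneg, auto\<close>)
          have "of_int (Cf R.t (z0+len) - Cf R.t (z0+0)) < of_nat (len - 0) * (1/s) + 1"
            using sside[of 0 len] by simp
          moreover have "Cf R.t (z0+len) = f + 1 + int N0 * b" using R.C_eNa[of N0] z0 lenv by (simp add: add.commute)
          moreover have "Cf R.t (z0+0) = 0" using R.C0 z0 by simp
          moreover have "(of_nat (len - 0) :: rat) = of_int (A1 + int N0 * A2)"
          proof -
            have ie: "(of_nat e :: rat) = of_int A1" using eA by (metis of_int_of_nat_eq)
            show ?thesis using lenv ia ie by (simp add: algebra_simps)
          qed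
          ultimately have "of_int (f + int N0 * b) < of_int (A1 + int N0 * A2) * (1/s)" by simp
          then show False using Y bB fB by simp
        qed
      next
        case od: False
        have z0: "z0 = e" and lenv: "len = N0 * a + (a - e)" using od unfolding z0_def len_def by auto
        have eA: "int e = A2 - A1" and fB: "f = B2 - B1" using od e_int unfolding f_def by auto
        show False
        proof (cases "s \<in> I1 ms n")
          case True
          then have slt: "s < of_int (A1 + int N0 * A2) / of_int (B1 + int N0 * B2)" using od cend unfolding I1e by simp
          have Y: "of_int (B1 + int N0 * B2) < of_int (A1 + int N0 * A2) * (1/s)"
            by (rule rat_less_div[OF s0 _ slt], rule of_int_pos) (use bnd in \<open>intro add_pos_nonneg, auto\<close>)
          have "of_int (Cf R.t (z0+len) - Cf R.t (z0+0)) > of_nat (len - 0) * (1/s) - 1"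
            using sside[of 0 len] by simp
          moreover have "z0 + len = (N0 + 1) * a" using z0 lenv ea by simp
          moreover have "Cf R.t ((N0 + 1) * a) = int (N0 + 1) * b" by (rule R.C_Na)
          moreover have "Cf R.t (z0+0) = f + 1" using R.Ce z0 by simp
          moreover have "(of_nat (len - 0) :: rat) = of_int (A1 + int N0 * A2)"
          proof -
            have "int (len - 0) = A1 + int N0 * A2" using lenv a_int eA ea by (simp add: of_nat_diff algebra_simps)
            then show ?thesis by (metis of_int_of_nat_eq)
          qed
          ultimately have X: "of_int (int (N0+1) * b - f) > of_int (A1 + int N0 * A2) * (1/s)" by simp
          have eq: "int (N0+1) * b - f = B1 + int N0 * B2" using bB fB by (simp add: algebra_simps)
          from X have "of_int (B1 + int N0 * B2) > of_int (A1 + int N0 * A2) * (1/s)" unfolding eq .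
          then show False using Y by linarith
        next
          case False
          then have "s \<in> I2 ms n" using sI by simp
          then have sge: "of_int (2*A2 - A1) / of_int (2*B2 - B1) \<le> s" using od bend unfolding I2e by simp
          have Y: "of_int (2*A2 - A1) * (1/s) \<le> of_int (2*B2 - B1)"
            by (rule rat_ge_div[OF s0 _ sge]) (use bnd in simp)
          have "of_int (Cf R.t (z0+2*a) - Cf R.t (z0+(a-e))) < of_nat (2*a - (a-e)) * (1/s) + 1"
            using sside[of "a-e" "2*a"] len2a by simp
          moreover have "Cf R.t (z0+2*a) = f + 1 + 2 * b" using R.C_eNa[of 2] z0 by simp
          moreover have "Cf R.t (z0+(a-e)) = b" using R.C_Na[of 1] z0 ea by simp
          moreover have "(of_nat (2*a - (a-e)) :: rat) = of_int (2*A2 - A1)"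
            using a_int eA ea by (simp add: of_nat_diff)
          ultimately have "of_int (f + 1 + 2 * b - b) < of_int (2*A2 - A1) * (1/s) + 1" by simp
          moreover have "f + 1 + 2 * b - b = (2*B2 - B1) + 1" using bB fB by simp
          ultimately show False using Y by simp
        qed
      qed
    qed
  qed
  show ?thesis using key unfolding Pat_def N0_def by auto
qed


end
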